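(* Let $\mathcal{G}$ be a finite group acting on $V=\mathbb{R}^n$ by permutation matrices $\pi\mapsto M_\pi$, and let $V=W^1\oplus\cdots\oplus W^R$ be the isotypic decomposition of this representation. Let $G$ be a random real symmetric $n\times n$ matrix drawn from the Gaussian Orthogonal Ensemble and let $\Lambda=\frac{1}{|\mathcal{G}|}\sum_{\pi\in\mathcal{G}}M_\pi G M_\pi^{\top}$. Then, almost surely, every eigenspace of $\Lambda$ is contained in a single isotypic component $W^r$.
   Context: The isotypic decomposition of a real representation $V$ of a finite group is the unique decomposition $V=W^1\oplus\cdots\oplus W^R$ where each $W^r$ is the sum of all subrepresentations of $V$ isomorphic to a fixed irreducible representation, distinct $r$ corresponding to inequivalent irreducible representations. The Gaussian Orthogonal Ensemble is the distribution of real symmetric matrices whose entries on and above the diagonal are independent normally distributed random variables. The map $G\mapsto\Lambda$ is the Reynolds operator (group averaging), so $\Lambda$ is symmetric and satisfies $M_\pi^\top\Lambda M_\pi=\Lambda$ for all $\pi\in\mathcal{G}$. *)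

theory Defs
  imports "HOL-Probability.Probability" "HOL-Algebra.Group_Action"
begin

text \<open>Permutation matrix of a permutation p of the index type: column j is the
  standard basis vector e_(p j), so that perm_matrix (p o q) = perm_matrix p ** perm_matrix q.\<close>
definition perm_matrix :: "('n::finite \<Rightarrow> 'n) \<Rightarrow> real^'n^'n" where
  "perm_matrix p = (\<chi> i j. if i = p j then 1 else 0)"

text \<open>The Gaussian Orthogonal Ensemble on real symmetric n x n matrices:
  G = (X + X^T)/sqrt 2 with X having i.i.d. standard normal entries; the entries of G
  on and above the diagonal are independent normal (off-diagonal variance 1,
  diagonal variance 2).\<close>
definition GOE :: "(real^'n::finite^'n) measure" where
  "GOE = distr (PiM (UNIV :: ('n \<times> 'n) set) (\<lambda>_. density lborel std_normal_density))
               borel (\<lambda>X. \<chi> i j. (X (i, j) + X (j, i)) / sqrt 2)"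

definition reynolds :: "('g, 'b) monoid_scheme \<Rightarrow> ('g \<Rightarrow> 'n::finite \<Rightarrow> 'n) \<Rightarrow> real^'n^'n \<Rightarrow> real^'n^'n" where
  "reynolds G \<phi> A = (1 / real (card (carrier G))) *\<^sub>R
     (\<Sum>g\<in>carrier G. perm_matrix (\<phi> g) ** A ** transpose (perm_matrix (\<phi> g)))"

definition subrep :: "('g, 'b) monoid_scheme \<Rightarrow> ('g \<Rightarrow> 'n::finite \<Rightarrow> 'n) \<Rightarrow> (real^'n) set \<Rightarrow> bool" where
  "subrep G \<phi> W \<longleftrightarrow> subspace W \<and> (\<forall>g\<in>carrier G. \<forall>x\<in>W. perm_matrix (\<phi> g) *v x \<in> W)"

definition irreducible_subrep :: "('g, 'b) monoid_scheme \<Rightarrow> ('g \<Rightarrow> 'n::finite \<Rightarrow> 'n) \<Rightarrow> (real^'n) set \<Rightarrow> bool" where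
  "irreducible_subrep G \<phi> W \<longleftrightarrow> subrep G \<phi> W \<and> W \<noteq> {0} \<and>
     (\<forall>W'. subrep G \<phi> W' \<and> W' \<subseteq> W \<longrightarrow> W' = {0} \<or> W' = W)"

definition iso_subrep :: "('g, 'b) monoid_scheme \<Rightarrow> ('g \<Rightarrow> 'n::finite \<Rightarrow> 'n) \<Rightarrow> (real^'n) set \<Rightarrow> (real^'n) set \<Rightarrow> bool" where
  "iso_subrep G \<phi> W W' \<longleftrightarrow> (\<exists>f. linear f \<and> bij_betw f W W' \<and>
     (\<forall>g\<in>carrier G. \<forall>x\<in>W. f (perm_matrix (\<phi> g) *v x) = perm_matrix (\<phi> g) *v f x))"

definition isotypic_component :: "('g, 'b) monoid_scheme \<Rightarrow> ('g \<Rightarrow> 'n::finite \<Rightarrow> 'n) \<Rightarrow> (real^'n) set \<Rightarrow> (real^'n) set" where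
  "isotypic_component G \<phi> U = span (\<Union>{W. subrep G \<phi> W \<and> iso_subrep G \<phi> W U})"

definition mat_eigenspace :: "real^'n::finite^'n \<Rightarrow> real \<Rightarrow> (real^'n) set" where
  "mat_eigenspace A c = {v. A *v v = c *\<^sub>R v}"

end

theory Submission
  imports Defs
begin

lemma perm_matrix_mult: "perm_matrix p ** perm_matrix q = perm_matrix (p \<circ> q)"
proof -
  have "(\<Sum>k\<in>UNIV. (if i = p k then 1 else 0) * (if k = q j then 1 else 0)) = (if i = p (q j) then 1 else (0::real))" for i j
  proof -
    have "(\<Sum>k\<in>UNIV. (if i = p k then 1 else 0) * (if k = q j then 1 else 0)) =
          (\<Sum>k\<in>UNIV. if k = q j then (if i = p k then 1 else 0) else (0::real))"
      by (rule sum.cong) auto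
    also have "\<dots> = (if i = p (q j) then 1 else 0)" by (simp add: sum.delta')
    finally show ?thesis .
  qed
  then show ?thesis
    by (simp add: perm_matrix_def matrix_matrix_mult_def vec_eq_iff)
qed

lemma perm_matrix_id: "perm_matrix id = mat 1"
  by (simp add: perm_matrix_def mat_def vec_eq_iff)

lemma perm_matrix_mulv: "bij p \<Longrightarrow> (perm_matrix p *v x) $ i = x $ (inv_into UNIV p i)"
proof -
  assume b: "bij p"
  have "(\<Sum>j\<in>UNIV. (if i = p j then 1 else 0) * x $ j) = (\<Sum>j\<in>UNIV. if j = inv_into UNIV p i then x $ j else 0)"
    by (rule sum.cong) (auto simp: b bij_inv_eq_iff)
  then show ?thesis by (simp add: perm_matrix_def matrix_vector_mult_def)
qed

lemma transpose_perm_matrix_mult: "inj p \<Longrightarrow> transpose (perm_matrix p) ** perm_matrix p = mat 1"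
proof -
  assume inj: "inj p"
  have "(\<Sum>k\<in>UNIV. (if k = p i then 1 else 0) * (if k = p j then 1 else 0)) = (if i = j then 1 else (0::real))" for i j
  proof -
    have "(\<Sum>k\<in>UNIV. (if k = p i then 1 else 0) * (if k = p j then 1 else 0)) =
          (\<Sum>k\<in>UNIV. if k = p i then (if k = p j then 1 else 0) else (0::real))"
      by (rule sum.cong) auto
    also have "\<dots> = (if i = j then 1 else 0)" using inj by (simp add: sum.delta inj_eq)
    finally show ?thesis .
  qed
  then show ?thesis
    by (simp add: perm_matrix_def matrix_matrix_mult_def vec_eq_iff transpose_def mat_def)
qed

lemma perm_matrix_mult_transpose: "inj p \<Longrightarrow> perm_matrix p ** transpose (perm_matrix p) = mat 1"
  using transpose_perm_matrix_mult matrix_left_right_inverse by blast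

lemma matrix_sum_mulv: "finite S \<Longrightarrow> (\<Sum>g\<in>S. M g) *v x = (\<Sum>g\<in>S. M g *v x)"
  by (induction S rule: finite_induct) (auto simp: matrix_vector_mult_add_rdistrib)

lemma mulv_sum: "finite S \<Longrightarrow> M *v (\<Sum>g\<in>S. f g) = (\<Sum>g\<in>S. M *v f g)"
  by (induction S rule: finite_induct) (auto simp: matrix_vector_right_distrib)

lemma mulv_scaleR: "M *v (c *\<^sub>R x) = c *\<^sub>R (M *v (x::real^'m::finite))"
  using matrix_vector_mul_linear[of M] by (simp add: linear_scale)

lemma reynolds_mulv:
  "reynolds G \<phi> A *v x = (1 / real (card (carrier G))) *\<^sub>R
     (\<Sum>g\<in>carrier G. perm_matrix (\<phi> g) *v (A *v (transpose (perm_matrix (\<phi> g)) *v x)))"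
proof (cases "finite (carrier G)")
  case True
  have "reynolds G \<phi> A *v x = (1 / real (card (carrier G))) *\<^sub>R ((\<Sum>g\<in>carrier G.
     perm_matrix (\<phi> g) ** A ** transpose (perm_matrix (\<phi> g))) *v x)"
    unfolding reynolds_def by (rule scaleR_matrix_vector_assoc[symmetric])
  also have "\<dots> = (1 / real (card (carrier G))) *\<^sub>R
     (\<Sum>g\<in>carrier G. perm_matrix (\<phi> g) *v (A *v (transpose (perm_matrix (\<phi> g)) *v x)))"
    by (simp only: matrix_sum_mulv[OF True] matrix_vector_mul_assoc matrix_mul_assoc)
  finally show ?thesis .
qed (simp add: reynolds_def)


lemma inner_mulv_transpose: "(M *v x) \<bullet> y = x \<bullet> (transpose M *v (y::real^'n::finite))"
proof -
  have "(y v* M) \<bullet> x = y \<bullet> (M *v x)" by (rule dot_lmul_matrix)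
  then show ?thesis by (simp add: inner_commute)
qed

locale permrep = group_action G "UNIV" \<phi>
  for G :: "('g, 'b) monoid_scheme" (structure) and \<phi> :: "'g \<Rightarrow> 'n::finite \<Rightarrow> 'n" +
  assumes finG: "finite (carrier G)"
begin

abbreviation P where "P g \<equiv> perm_matrix (\<phi> g)"

lemma grp: "group G"
  using group_hom unfolding group_hom_def by blast

lemma phi_bij: "g \<in> carrier G \<Longrightarrow> bij (\<phi> g)"
  using bij_prop0 by (simp add: Bij_def)

lemma phi_mult: "g \<in> carrier G \<Longrightarrow> h \<in> carrier G \<Longrightarrow> \<phi> (g \<otimes> h) = \<phi> g \<circ> \<phi> h"
  using composition_rule by (auto simp: fun_eq_iff)

lemma phi_one: "\<phi> \<one> = id"
  using id_eq_one by (auto simp: fun_eq_iff)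

lemma P_mult: "g \<in> carrier G \<Longrightarrow> h \<in> carrier G \<Longrightarrow> P (g \<otimes> h) = P g ** P h"
  by (simp add: phi_mult perm_matrix_mult)

lemma P_one: "P \<one> = mat 1"
  by (simp add: phi_one perm_matrix_id)

lemma P_inv_mult: "g \<in> carrier G \<Longrightarrow> P (inv g) ** P g = mat 1"
  using grp P_mult[of "inv g" g] P_one by (simp add: group.l_inv group.inv_closed)

lemma P_T: "g \<in> carrier G \<Longrightarrow> transpose (P g) = P (inv g)"
proof -
  assume g: "g \<in> carrier G"
  have "P (inv g) = P (inv g) ** (P g ** transpose (P g))"
    using perm_matrix_mult_transpose[of "\<phi> g"] phi_bij[OF g] by (simp add: bij_is_inj)
  also have "\<dots> = transpose (P g)"
    by (simp add: matrix_mul_assoc P_inv_mult[OF g])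
  finally show ?thesis by simp
qed

lemma P_inv_left: "g \<in> carrier G \<Longrightarrow> P (inv g) *v (P g *v x) = x"
  by (simp add: matrix_vector_mul_assoc P_inv_mult)

lemma P_inv_right: "g \<in> carrier G \<Longrightarrow> P g *v (P (inv g) *v x) = x"
  using P_inv_left[of "inv g" x] grp by (simp add: group.inv_closed group.inv_inv)

lemma P_inner: "g \<in> carrier G \<Longrightarrow> (P g *v x) \<bullet> y = x \<bullet> (P (inv g) *v y)"
  by (subst inner_mulv_transpose) (simp only: P_T)

lemma P_inner2: "g \<in> carrier G \<Longrightarrow> (P g *v x) \<bullet> (P g *v y) = x \<bullet> y"
  by (simp add: P_inner P_inv_left)

lemma reynolds_mulv':
  "reynolds G \<phi> A *v x = (1 / real (card (carrier G))) *\<^sub>R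
     (\<Sum>g\<in>carrier G. P g *v (A *v (P (inv g) *v x)))"
proof -
  have "(\<Sum>g\<in>carrier G. P g *v (A *v (transpose (P g) *v x))) =
        (\<Sum>g\<in>carrier G. P g *v (A *v (P (inv g) *v x)))"
    by (rule sum.cong) (simp_all only: P_T)
  then show ?thesis by (simp only: reynolds_mulv)
qed

lemma reynolds_equiv:
  assumes h: "h \<in> carrier G"
  shows "reynolds G \<phi> A *v (P h *v x) = P h *v (reynolds G \<phi> A *v x)"
proof -
  interpret group G by (rule grp)
  have "(\<Sum>g\<in>carrier G. P g *v (A *v (P (inv g) *v (P h *v x)))) =
        (\<Sum>k\<in>carrier G. P (h \<otimes> k) *v (A *v (P (inv (h \<otimes> k)) *v (P h *v x))))"
  proof (rule sum.reindex_bij_witness[of _ "\<lambda>k. h \<otimes> k" "\<lambda>g. inv h \<otimes> g"])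
  qed (use h in \<open>simp_all add: m_assoc[symmetric] r_inv l_inv\<close>)
  also have "\<dots> = (\<Sum>k\<in>carrier G. P h *v (P k *v (A *v (P (inv k) *v x))))"
  proof (rule sum.cong)
    fix k assume k: "k \<in> carrier G"
    have "P (inv (h \<otimes> k)) *v (P h *v x) = P (inv k) *v x"
      using h k by (simp add: inv_mult_group P_mult matrix_vector_mul_assoc[symmetric] P_inv_left)
    then show "P (h \<otimes> k) *v (A *v (P (inv (h \<otimes> k)) *v (P h *v x))) = P h *v (P k *v (A *v (P (inv k) *v x)))"
      using h k by (simp add: P_mult matrix_vector_mul_assoc[symmetric])
  qed simp
  also have "\<dots> = P h *v (\<Sum>k\<in>carrier G. P k *v (A *v (P (inv k) *v x)))"
    by (simp add: mulv_sum finG)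
  finally show ?thesis
    by (simp only: reynolds_mulv' mulv_scaleR)
qed

lemma reynolds_sym:
  assumes "transpose A = A"
  shows "(reynolds G \<phi> A *v x) \<bullet> y = x \<bullet> (reynolds G \<phi> A *v y)"
proof -
  interpret group G by (rule grp)
  have As: "(A *v u) \<bullet> v = u \<bullet> (A *v v)" for u v
    by (metis inner_mulv_transpose assms)
  have "(\<Sum>g\<in>carrier G. P g *v (A *v (P (inv g) *v x))) \<bullet> y =
        (\<Sum>g\<in>carrier G. (P g *v (A *v (P (inv g) *v x))) \<bullet> y)"
    by (simp add: inner_sum_left)
  also have "\<dots> = (\<Sum>g\<in>carrier G. x \<bullet> (P g *v (A *v (P (inv g) *v y))))"
  proof (rule sum.cong)
    fix g assume g: "g \<in> carrier G"
    have "(P g *v (A *v (P (inv g) *v x))) \<bullet> y = (A *v (P (inv g) *v x)) \<bullet> (P (inv g) *v y)"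
      using g by (simp add: P_inner)
    also have "\<dots> = (P (inv g) *v x) \<bullet> (A *v (P (inv g) *v y))" by (rule As)
    also have "\<dots> = x \<bullet> (P g *v (A *v (P (inv g) *v y)))"
      using g by (simp add: P_inner inv_inv)
    finally show "(P g *v (A *v (P (inv g) *v x))) \<bullet> y = x \<bullet> (P g *v (A *v (P (inv g) *v y)))" .
  qed simp
  also have "\<dots> = x \<bullet> (\<Sum>g\<in>carrier G. P g *v (A *v (P (inv g) *v y)))"
    by (simp add: inner_sum_right)
  finally show ?thesis
    by (simp only: reynolds_mulv' inner_scaleR_left inner_scaleR_right)
qed

end

context permrep begin

definition orth :: "(real^'n) set \<Rightarrow> (real^'n) set" where
  "orth W = {x. \<forall>w\<in>W. x \<bullet> w = 0}"

abbreviation "sr \<equiv> subrep G \<phi>"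
abbreviation "irr \<equiv> irreducible_subrep G \<phi>"
abbreviation "isoR \<equiv> iso_subrep G \<phi>"
abbreviation "ic \<equiv> isotypic_component G \<phi>"

lemma sr_iff: "sr W \<longleftrightarrow> subspace W \<and> (\<forall>g\<in>carrier G. \<forall>x\<in>W. P g *v x \<in> W)"
  by (simp add: subrep_def)

lemma irr_sr: "irr U \<Longrightarrow> sr U"
  by (simp add: irreducible_subrep_def)

lemma orth_subspace: "subspace (orth W)"
  unfolding subspace_def orth_def by (auto simp: inner_add_left)

lemma orth_sr: assumes "sr W" shows "sr (orth W)"
  unfolding sr_iff
proof (intro conjI ballI orth_subspace)
  fix g x assume g: "g \<in> carrier G" and x: "x \<in> orth W"
  have "inv g \<in> carrier G" using g grp by (simp add: group.inv_closed)
  then have "\<forall>w\<in>W. P (inv g) *v w \<in> W" using assms by (simp add: sr_iff)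
  then show "P g *v x \<in> orth W"
    using x g unfolding orth_def by (simp add: P_inner)
qed

lemma orth_Int: "subspace W \<Longrightarrow> W \<inter> orth W = {0}"
  unfolding orth_def by (auto simp: subspace_0)

lemma in_orth_span: assumes "\<forall>w\<in>S. x \<bullet> w = 0" shows "x \<in> orth (span S)"
proof -
  have "subspace {y. x \<bullet> y = 0}" unfolding subspace_def by (auto simp: inner_add_right)
  then have "span S \<subseteq> {y. x \<bullet> y = 0}" using assms by (intro span_minimal) auto
  then show ?thesis unfolding orth_def by auto
qed

lemma sr_Int: "sr W1 \<Longrightarrow> sr W2 \<Longrightarrow> sr (W1 \<inter> W2)"
  by (auto simp: sr_iff subspace_inter)

lemma sr_span: assumes "\<And>W. W \<in> \<W> \<Longrightarrow> sr W" shows "sr (span (\<Union>\<W>))"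
  unfolding sr_iff
proof (intro conjI ballI subspace_span)
  fix g x assume g: "g \<in> carrier G" and x: "x \<in> span (\<Union>\<W>)"
  have lin: "linear ((*v) (P g))" by simp
  have "(*v) (P g) ` (\<Union>\<W>) \<subseteq> \<Union>\<W>" using assms g by (auto simp: sr_iff)
  then have "span ((*v) (P g) ` (\<Union>\<W>)) \<subseteq> span (\<Union>\<W>)" by (rule span_mono)
  moreover have "P g *v x \<in> span ((*v) (P g) ` (\<Union>\<W>))"
    using x by (simp add: linear_span_image[OF lin])
  ultimately show "P g *v x \<in> span (\<Union>\<W>)" by blast
qed

lemma ic_sr: "sr (ic U)"
  unfolding isotypic_component_def by (rule sr_span) auto

lemma eig_sr: "sr (mat_eigenspace (reynolds G \<phi> A) c)"
  unfolding sr_iff mat_eigenspace_def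
proof (intro conjI ballI)
  show "subspace {v. reynolds G \<phi> A *v v = c *\<^sub>R v}"
    unfolding subspace_def by (auto simp: matrix_vector_right_distrib mulv_scaleR scaleR_add_right)
next
  fix g x assume "g \<in> carrier G" "x \<in> {v. reynolds G \<phi> A *v v = c *\<^sub>R v}"
  then show "P g *v x \<in> {v. reynolds G \<phi> A *v v = c *\<^sub>R v}"
    by (simp add: reynolds_equiv mulv_scaleR)
qed

lemma ex_irr: assumes "sr W" "W \<noteq> {0}" shows "\<exists>U. irr U \<and> U \<subseteq> W"
proof -
  let ?Q = "\<lambda>U. sr U \<and> U \<noteq> {0} \<and> U \<subseteq> W"
  obtain U where U: "?Q U" and min: "\<And>U'. ?Q U' \<Longrightarrow> dim U \<le> dim U'"
    using ex_has_least_nat[of ?Q W dim] assms by blast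
  have "irr U"
    unfolding irreducible_subrep_def
  proof (intro conjI allI impI)
    fix U' assume U': "sr U' \<and> U' \<subseteq> U"
    show "U' = {0} \<or> U' = U"
    proof (cases "U' = {0}")
      case False
      then have "dim U \<le> dim U'" using U U' by (intro min) auto
      then have "U' = U" using U U' by (intro subspace_dim_equal) (auto simp: sr_iff)
      then show ?thesis by simp
    qed simp
  qed (use U in auto)
  then show ?thesis using U by blast
qed

lemma iso_refl: "isoR W W"
  unfolding iso_subrep_def by (rule exI[of _ id]) (simp add: linear_id)

lemma iso_trans: assumes "isoR W1 W2" "isoR W2 W3" shows "isoR W1 W3"
proof -
  obtain f where f: "linear f" "bij_betw f W1 W2" "\<forall>g\<in>carrier G. \<forall>x\<in>W1. f (P g *v x) = P g *v f x"
    using assms(1) unfolding iso_subrep_def by blast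
  obtain h where h: "linear h" "bij_betw h W2 W3" "\<forall>g\<in>carrier G. \<forall>x\<in>W2. h (P g *v x) = P g *v h x"
    using assms(2) unfolding iso_subrep_def by blast
  have "linear (h \<circ> f)" using f h by (simp add: linear_compose)
  moreover have "bij_betw (h \<circ> f) W1 W3" by (rule bij_betw_trans[OF f(2) h(2)])
  moreover have "\<forall>g\<in>carrier G. \<forall>x\<in>W1. (h \<circ> f) (P g *v x) = P g *v (h \<circ> f) x"
    using f h by (auto simp: bij_betw_def)
  ultimately show ?thesis unfolding iso_subrep_def by blast
qed

lemma iso_sym: assumes "sr W1" "isoR W1 W2" shows "isoR W2 W1"
proof -
  obtain f where f: "linear f" "bij_betw f W1 W2" "\<forall>g\<in>carrier G. \<forall>x\<in>W1. f (P g *v x) = P g *v f x"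
    using assms(2) unfolding iso_subrep_def by blast
  have sW: "subspace W1" using assms(1) by (simp add: sr_iff)
  then have spW: "span W1 = W1" by simp
  have "inj_on f (span W1)" using f(2) by (simp add: spW bij_betw_def)
  then obtain h where h: "linear h" "\<forall>x\<in>span W1. h (f x) = x"
    using linear_inj_on_left_inverse[OF f(1)] by blast
  have hf: "\<And>x. x \<in> W1 \<Longrightarrow> h (f x) = x" using h spW by auto
  have fW: "f ` W1 = W2" using f(2) by (simp add: bij_betw_def)
  have "bij_betw h W2 W1"
    unfolding bij_betw_def
  proof
    show "inj_on h W2" unfolding inj_on_def using hf fW by auto
    show "h ` W2 = W1"
    proof
      show "h ` W2 \<subseteq> W1" using hf fW by auto
      show "W1 \<subseteq> h ` W2" using hf fW by (metis image_eqI subsetI)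
    qed
  qed
  moreover have "\<forall>g\<in>carrier G. \<forall>y\<in>W2. h (P g *v y) = P g *v h y"
  proof (intro ballI)
    fix g y assume g: "g \<in> carrier G" and y: "y \<in> W2"
    then obtain x where x: "x \<in> W1" "y = f x" using fW by auto
    have "P g *v x \<in> W1" using assms(1) g x by (simp add: sr_iff)
    then show "h (P g *v y) = P g *v h y"
      using x f(3) g hf by metis
  qed
  ultimately show ?thesis using h(1) unfolding iso_subrep_def by blast
qed

lemma irr_iso: assumes U: "irr U" and W: "sr W" and i: "isoR W U" shows "irr W"
proof -
  obtain f where f: "linear f" "bij_betw f W U" "\<forall>g\<in>carrier G. \<forall>x\<in>W. f (P g *v x) = P g *v f x"
    using i unfolding iso_subrep_def by blast
  have fW: "f ` W = U" and inj: "inj_on f W" using f(2) by (auto simp: bij_betw_def)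
  have sU: "sr U" "U \<noteq> {0}" and irrU: "\<And>U'. sr U' \<Longrightarrow> U' \<subseteq> U \<Longrightarrow> U' = {0} \<or> U' = U"
    using U unfolding irreducible_subrep_def by auto
  have f0: "f 0 = 0" using f(1) by (rule linear_0)
  have sW: "subspace W" using W by (simp add: sr_iff)
  have "W \<noteq> {0}"
  proof
    assume "W = {0}" then have "U = {0}" using fW f0 by auto
    then show False using sU by simp
  qed
  moreover have "W' = {0} \<or> W' = W" if W': "sr W'" "W' \<subseteq> W" for W'
  proof -
    have "sr (f ` W')"
      unfolding sr_iff
    proof (intro conjI ballI)
      show "subspace (f ` W')" using W' f(1) by (simp add: sr_iff linear_subspace_image)
      fix g y assume g: "g \<in> carrier G" and y: "y \<in> f ` W'"
      then obtain x where x: "x \<in> W'" "y = f x" by auto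
      have "P g *v x \<in> W'" using W' g x by (simp add: sr_iff)
      moreover have "f (P g *v x) = P g *v y" using f(3) g x W' by auto
      ultimately show "P g *v y \<in> f ` W'" by (metis image_eqI)
    qed
    moreover have "f ` W' \<subseteq> U" using W' fW by auto
    ultimately have "f ` W' = {0} \<or> f ` W' = U" by (rule irrU)
    then show ?thesis
    proof
      assume a: "f ` W' = {0}"
      have "0 \<in> W'" using W' by (simp add: sr_iff subspace_0)
      have "W' \<subseteq> {0}"
      proof
        fix x assume "x \<in> W'"
        then have "f x = f 0" "x \<in> W" "0 \<in> W" using a f0 W' sW subspace_0 by auto
        then show "x \<in> {0}" using inj by (auto simp: inj_on_def)
      qed
      then show ?thesis using \<open>0 \<in> W'\<close> by auto
    next
      assume a: "f ` W' = U"
      have "W \<subseteq> W'"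
      proof
        fix x assume x: "x \<in> W"
        then have "f x \<in> f ` W'" using a fW by auto
        then obtain x' where "x' \<in> W'" "f x' = f x" by auto
        then show "x \<in> W'" using inj x W' by (auto simp: inj_on_def)
      qed
      then show ?thesis using W' by auto
    qed
  qed
  ultimately show ?thesis using W unfolding irreducible_subrep_def by blast
qed

end

context permrep begin

lemma schur:
  assumes W: "irr W" and f: "linear f" and eq: "\<And>g x. g \<in> carrier G \<Longrightarrow> f (P g *v x) = P g *v f x"
  shows "(\<forall>x\<in>W. f x = 0) \<or> (inj_on f W \<and> sr (f ` W) \<and> isoR W (f ` W))"
proof -
  have srW: "sr W" and irrW: "\<And>U'. sr U' \<Longrightarrow> U' \<subseteq> W \<Longrightarrow> U' = {0} \<or> U' = W"
    using W unfolding irreducible_subrep_def by auto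
  have sW: "subspace W" using srW by (simp add: sr_iff)
  let ?K = "{x\<in>W. f x = 0}"
  have "sr ?K"
    unfolding sr_iff
  proof (intro conjI ballI)
    show "subspace ?K" using sW f unfolding subspace_def
      by (auto simp: linear_add linear_scale linear_0)
    fix g x assume "g \<in> carrier G" "x \<in> ?K"
    then show "P g *v x \<in> ?K" using srW eq by (auto simp: sr_iff)
  qed
  then have "?K = {0} \<or> ?K = W" using irrW by auto
  then show ?thesis
  proof
    assume K: "?K = {0}"
    have inj: "inj_on f W"
    proof (rule inj_onI)
      fix x y assume xy: "x \<in> W" "y \<in> W" "f x = f y"
      then have "x - y \<in> ?K" using sW f by (simp add: subspace_diff linear_diff)
      then show "x = y" using K by auto
    qed
    have sfW: "sr (f ` W)"
      unfolding sr_iff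
    proof (intro conjI ballI)
      show "subspace (f ` W)" using sW f by (simp add: linear_subspace_image)
      fix g y assume g: "g \<in> carrier G" and "y \<in> f ` W"
      then obtain x where x: "x \<in> W" "y = f x" by auto
      then have "P g *v x \<in> W" using srW g by (simp add: sr_iff)
      then show "P g *v y \<in> f ` W" using x eq g by (metis image_eqI)
    qed
    have "isoR W (f ` W)"
      unfolding iso_subrep_def using f inj eq by (auto simp: bij_betw_def)
    then show ?thesis using inj sfW by blast
  qed auto
qed

lemma ic_invariant:
  assumes U: "irr U" and M: "\<And>g x. g \<in> carrier G \<Longrightarrow> M *v (P g *v x) = P g *v (M *v x)"
    and x: "x \<in> ic U"
  shows "M *v x \<in> ic U"
proof -
  let ?WW = "{W. sr W \<and> isoR W U}"
  have sic: "subspace (ic U)" using ic_sr by (simp add: sr_iff)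
  have "(*v) M ` (\<Union>?WW) \<subseteq> ic U"
  proof
    fix y assume "y \<in> (*v) M ` (\<Union>?WW)"
    then obtain W w where W: "sr W" "isoR W U" and w: "w \<in> W" and y: "y = M *v w" by auto
    have irrW: "irr W" using irr_iso[OF U W] .
    have "(\<forall>x\<in>W. M *v x = 0) \<or> (inj_on ((*v) M) W \<and> sr ((*v) M ` W) \<and> isoR W ((*v) M ` W))"
      by (rule schur[OF irrW]) (auto simp: M)
    then show "y \<in> ic U"
    proof
      assume "\<forall>x\<in>W. M *v x = 0" then show ?thesis using y w sic by (simp add: subspace_0)
    next
      assume a: "inj_on ((*v) M) W \<and> sr ((*v) M ` W) \<and> isoR W ((*v) M ` W)"
      then have "isoR ((*v) M ` W) W" using iso_sym W by blast
      then have "isoR ((*v) M ` W) U" using iso_trans W by blast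
      then have "(*v) M ` W \<in> ?WW" using a by blast
      then show ?thesis using y w unfolding isotypic_component_def
        by (meson UnionI image_eqI span_superset subsetD)
    qed
  qed
  then have "span ((*v) M ` (\<Union>?WW)) \<subseteq> ic U" using sic by (rule span_minimal)
  moreover have "M *v x \<in> span ((*v) M ` (\<Union>?WW))"
    using x unfolding isotypic_component_def by (simp add: linear_span_image)
  ultimately show ?thesis by blast
qed


lemma proj_exists:
  assumes W: "sr W"
  shows "\<exists>f. linear f \<and> (\<forall>x. f x \<in> W) \<and> (\<forall>x. x - f x \<in> orth W) \<and> (\<forall>x\<in>W. f x = x) \<and>
     (\<forall>g\<in>carrier G. \<forall>x. f (P g *v x) = P g *v f x) \<and> (\<forall>x y. f x \<bullet> y = x \<bullet> f y)"
proof -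
  have sW: "subspace W" using W by (simp add: sr_iff)
  obtain B where B: "B \<subseteq> W" "pairwise orthogonal B" "\<And>x. x \<in> B \<Longrightarrow> norm x = 1"
     "independent B" "card B = dim W" "span B = W"
    by (rule orthonormal_basis_subspace[OF sW]) (rule that; assumption)
  have finB: "finite B" using B(4) by (simp add: finiteI_independent)
  define f where "f x = (\<Sum>b\<in>B. (x \<bullet> b) *\<^sub>R b)" for x
  have lin: "linear f"
  proof (rule linearI)
    show "f (x + y) = f x + f y" for x y
      by (simp add: f_def inner_add_left scaleR_add_left sum.distrib)
    show "f (c *\<^sub>R x) = c *\<^sub>R f x" for c x
      by (simp add: f_def scaleR_sum_right)
  qed
  have fW: "f x \<in> W" for x
    unfolding f_def
  proof (rule subspace_sum[OF sW])
    fix b assume "b \<in> B"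
    then have "b \<in> W" using B(1) by blast
    then show "(x \<bullet> b) *\<^sub>R b \<in> W" using sW by (rule subspace_mul[rotated])
  qed
  have bb: "b' \<in> B \<Longrightarrow> f x \<bullet> b' = x \<bullet> b'" for x b'
  proof -
    assume b': "b' \<in> B"
    have "f x \<bullet> b' = (\<Sum>b\<in>B. (x \<bullet> b) * (b \<bullet> b'))"
      by (simp add: f_def inner_sum_left)
    also have "\<dots> = (\<Sum>b\<in>B. if b = b' then x \<bullet> b' else 0)"
    proof (rule sum.cong)
      fix b assume b: "b \<in> B"
      show "(x \<bullet> b) * (b \<bullet> b') = (if b = b' then x \<bullet> b' else 0)"
      proof (cases "b = b'")
        case True
        then have "b \<bullet> b' = 1" using B(3)[OF b'] by (simp add: dot_square_norm)
        then show ?thesis using True by simp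
      next
        case False
        then have "b \<bullet> b' = 0" using B(2) b b' by (auto simp: pairwise_def orthogonal_def)
        then show ?thesis using False by simp
      qed
    qed simp
    also have "\<dots> = x \<bullet> b'" using b' finB by (simp add: sum.delta')
    finally show ?thesis .
  qed
  have orthf: "x - f x \<in> orth W" for x
  proof -
    have "\<forall>w\<in>B. (x - f x) \<bullet> w = 0" using bb by (simp add: inner_diff_left)
    then show ?thesis using in_orth_span[of B "x - f x"] B(6) by simp
  qed
  have uniq: "\<And>x y. y \<in> W \<Longrightarrow> x - y \<in> orth W \<Longrightarrow> f x = y"
  proof -
    fix x y assume y: "y \<in> W" and xy: "x - y \<in> orth W"
    have "f x - y = (x - y) - (x - f x)" by simp
    moreover have "(x - y) - (x - f x) \<in> orth W" by (rule subspace_diff[OF orth_subspace xy orthf])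
    ultimately have "f x - y \<in> orth W" by simp
    moreover have "f x - y \<in> W" using y fW sW by (simp add: subspace_diff)
    ultimately have "f x - y \<in> W \<inter> orth W" by blast
    then have "f x - y = 0" unfolding orth_Int[OF sW] by blast
    then show "f x = y" by simp
  qed
  have fid: "\<forall>x\<in>W. f x = x"
  proof
    fix x assume "x \<in> W"
    moreover have "x - x \<in> orth W" using orth_subspace by (simp add: subspace_0)
    ultimately show "f x = x" by (rule uniq)
  qed
  have feq: "\<forall>g\<in>carrier G. \<forall>x. f (P g *v x) = P g *v f x"
  proof (intro ballI allI)
    fix g x assume g: "g \<in> carrier G"
    have "P g *v f x \<in> W" using W g fW by (simp add: sr_iff)
    moreover have "P g *v (x - f x) \<in> orth W"
      using orth_sr[OF W] g orthf by (simp add: sr_iff)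
    then have "P g *v x - P g *v f x \<in> orth W"
      by (simp only: matrix_vector_mult_diff_distrib)
    ultimately show "f (P g *v x) = P g *v f x" by (rule uniq)
  qed
  have ow: "u \<in> W \<Longrightarrow> v \<in> orth W \<Longrightarrow> u \<bullet> v = 0" for u v
    unfolding orth_def by (simp add: inner_commute)
  have sa: "\<forall>x y. f x \<bullet> y = x \<bullet> f y"
  proof (intro allI)
    fix x y
    have "f x \<bullet> y = f x \<bullet> f y + f x \<bullet> (y - f y)" by (simp add: inner_diff_right)
    also have "\<dots> = f x \<bullet> f y" using ow[OF fW orthf] by simp
    also have "\<dots> = f x \<bullet> f y + (x - f x) \<bullet> f y" using ow[OF fW orthf] by (simp add: inner_commute)
    also have "\<dots> = x \<bullet> f y" by (simp add: inner_diff_left)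
    finally show "f x \<bullet> y = x \<bullet> f y" .
  qed
  show ?thesis by (rule exI[of _ f]) (use lin fW orthf fid feq sa in blast)
qed

end

context permrep begin

lemma self_in_ic: "irr U \<Longrightarrow> U \<subseteq> ic U"
  unfolding isotypic_component_def using iso_refl irr_sr
  by (metis (mono_tags, lifting) Sup_upper mem_Collect_eq span_superset subset_trans)

lemma ic_eq: assumes U1: "irr U1" and U2: "irr U2" and i: "isoR U1 U2" shows "ic U1 = ic U2"
proof -
  have "isoR W U1 \<longleftrightarrow> isoR W U2" if "sr W" for W
    using iso_trans[OF _ i] iso_trans[OF _ iso_sym[OF irr_sr[OF U1] i]] by blast
  then have "{W. sr W \<and> isoR W U1} = {W. sr W \<and> isoR W U2}" by blast
  then show ?thesis unfolding isotypic_component_def by simp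
qed

lemma ic_orth:
  assumes U1: "irr U1" and U2: "irr U2" and ni: "\<not> isoR U1 U2"
  shows "ic U1 \<subseteq> orth (ic U2)"
proof -
  have key: "w1 \<bullet> w2 = 0" if W1: "sr W1" "isoR W1 U1" and W2: "sr W2" "isoR W2 U2"
    and w1: "w1 \<in> W1" and w2: "w2 \<in> W2" for W1 W2 w1 w2
  proof -
    have irr1: "irr W1" by (rule irr_iso[OF U1 W1])
    have irr2: "irr W2" by (rule irr_iso[OF U2 W2])
    obtain f where f: "linear f" "\<forall>x. f x \<in> W2" "\<forall>x. x - f x \<in> orth W2" "\<forall>x\<in>W2. f x = x"
      "\<forall>g\<in>carrier G. \<forall>x. f (P g *v x) = P g *v f x"
      using proj_exists[OF W2(1)] by blast
    have "(\<forall>x\<in>W1. f x = 0) \<or> (inj_on f W1 \<and> sr (f ` W1) \<and> isoR W1 (f ` W1))"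
      by (rule schur[OF irr1 f(1)]) (use f(5) in blast)
    then show ?thesis
    proof
      assume "\<forall>x\<in>W1. f x = 0"
      then have "w1 \<in> orth W2" using f(3) w1 by (metis diff_zero)
      then show ?thesis using w2 unfolding orth_def by blast
    next
      assume a: "inj_on f W1 \<and> sr (f ` W1) \<and> isoR W1 (f ` W1)"
      have "W1 \<noteq> {0}" using irr1 by (simp add: irreducible_subrep_def)
      moreover have "0 \<in> W1" using W1(1) by (simp add: sr_iff subspace_0)
      ultimately obtain x where x: "x \<in> W1" "x \<noteq> 0" by blast
      have "f 0 = 0" using f(1) by (rule linear_0)
      then have "f x \<noteq> 0" using a x \<open>0 \<in> W1\<close> by (metis inj_on_def)
      then have "f ` W1 \<noteq> {0}" using x by blast
      moreover have "f ` W1 \<subseteq> W2" using f(2) by blast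
      ultimately have "f ` W1 = W2" using irr2 a unfolding irreducible_subrep_def by blast
      then have "isoR W1 W2" using a by simp
      then have "isoR U1 W2" using iso_trans iso_sym[OF W1] by blast
      then have "isoR U1 U2" using iso_trans W2 by blast
      then show ?thesis using ni by blast
    qed
  qed
  have "\<Union>{W. sr W \<and> isoR W U1} \<subseteq> orth (ic U2)"
  proof
    fix w1 assume "w1 \<in> \<Union>{W. sr W \<and> isoR W U1}"
    then obtain W1 where W1: "sr W1" "isoR W1 U1" "w1 \<in> W1" by blast
    have "\<forall>w\<in>\<Union>{W. sr W \<and> isoR W U2}. w1 \<bullet> w = 0" using key W1 by blast
    then show "w1 \<in> orth (ic U2)" unfolding isotypic_component_def by (rule in_orth_span)
  qed
  then show ?thesis unfolding isotypic_component_def[of G \<phi> U1]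
    using orth_subspace by (rule span_minimal)
qed

lemma ic_dichotomy: "irr U1 \<Longrightarrow> irr U2 \<Longrightarrow> ic U1 = ic U2 \<or> ic U1 \<subseteq> orth (ic U2)"
  using ic_eq ic_orth by blast

lemma ic_nonzero: assumes "irr U" shows "\<exists>v\<in>ic U. v \<noteq> 0"
proof -
  have "U \<noteq> {0}" "0 \<in> U" using assms by (auto simp: irreducible_subrep_def sr_iff subspace_0)
  then obtain v where "v \<in> U" "v \<noteq> 0" by blast
  then show ?thesis using self_in_ic[OF assms] by blast
qed

lemma comps_finite: "finite {ic U | U. irr U}"
proof -
  let ?C = "{ic U | U. irr U}"
  define pick where "pick C = (SOME v. v \<in> C \<and> v \<noteq> 0)" for C :: "(real^'n) set"
  have pk: "pick C \<in> C \<and> pick C \<noteq> 0" if CC: "C \<in> ?C" for C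
  proof -
    obtain U where "irr U" "C = ic U" using CC by blast
    then have "\<exists>v. v \<in> C \<and> v \<noteq> 0" using ic_nonzero by blast
    then show ?thesis unfolding pick_def by (rule someI_ex)
  qed
  have orthC: "C1 \<noteq> C2 \<Longrightarrow> C1 \<in> ?C \<Longrightarrow> C2 \<in> ?C \<Longrightarrow> x \<in> C1 \<Longrightarrow> y \<in> C2 \<Longrightarrow> x \<bullet> y = 0" for C1 C2 x y
  proof -
    assume ne: "C1 \<noteq> C2" and c1: "C1 \<in> ?C" and c2: "C2 \<in> ?C" and x: "x \<in> C1" and y: "y \<in> C2"
    obtain U1 where U1: "irr U1" "C1 = ic U1" using c1 by blast
    obtain U2 where U2: "irr U2" "C2 = ic U2" using c2 by blast
    have "C1 \<subseteq> orth C2" using ic_dichotomy[OF U1(1) U2(1)] U1(2) U2(2) ne by blast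
    then show "x \<bullet> y = 0" using x y unfolding orth_def by blast
  qed
  have inj: "inj_on pick ?C"
  proof (rule inj_onI)
    fix C1 C2 assume C: "C1 \<in> ?C" "C2 \<in> ?C" "pick C1 = pick C2"
    show "C1 = C2"
    proof (rule ccontr)
      assume "C1 \<noteq> C2"
      then have "pick C1 \<bullet> pick C2 = 0" using orthC[of C1 C2] C(1,2) pk[OF C(1)] pk[OF C(2)] by blast
      then show False using C(3) pk[OF C(2)] by simp
    qed
  qed
  have "pairwise orthogonal (pick ` ?C)"
    unfolding pairwise_def orthogonal_def
  proof (intro ballI impI)
    fix x y assume x: "x \<in> pick ` ?C" and y: "y \<in> pick ` ?C" and ne: "x \<noteq> y"
    obtain C1 where C1: "C1 \<in> ?C" "x = pick C1" using x by blast
    obtain C2 where C2: "C2 \<in> ?C" "y = pick C2" using y by blast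
    have "C1 \<noteq> C2" using ne C1 C2 by blast
    then show "x \<bullet> y = 0" using orthC[of C1 C2] C1 C2 pk[OF C1(1)] pk[OF C2(1)] by blast
  qed
  moreover have "0 \<notin> pick ` ?C"
  proof
    assume "0 \<in> pick ` ?C"
    then obtain C where "C \<in> ?C" "0 = pick C" by blast
    then show False using pk[of C] by simp
  qed
  ultimately have "independent (pick ` ?C)" by (rule pairwise_orthogonal_independent)
  then have "finite (pick ` ?C)" by (rule finiteI_independent)
  then show ?thesis using inj by (rule finite_imageD)
qed

end

definition bad :: "(real^'n::finite) set \<Rightarrow> (real^'n) set \<Rightarrow> real^'n^'n \<Rightarrow> bool" where
  "bad C1 C2 L \<longleftrightarrow> (\<exists>c v w. v \<in> C1 \<and> v \<noteq> 0 \<and> w \<in> C2 \<and> w \<noteq> 0 \<and> L *v v = c *\<^sub>R v \<and> L *v w = c *\<^sub>R w)"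

context permrep begin

lemma deterministic:
  assumes sym: "transpose A = A"
    and GC: "\<forall>C1\<in>{ic U |U. irr U}. \<forall>C2\<in>{ic U |U. irr U}. C1 \<noteq> C2 \<longrightarrow> \<not> bad C1 C2 (reynolds G \<phi> A)"
  shows "\<forall>c. (\<exists>v. v \<noteq> 0 \<and> reynolds G \<phi> A *v v = c *\<^sub>R v) \<longrightarrow>
           (\<exists>U. irr U \<and> mat_eigenspace (reynolds G \<phi> A) c \<subseteq> ic U)"
proof (intro allI impI)
  fix c assume "\<exists>v. v \<noteq> 0 \<and> reynolds G \<phi> A *v v = c *\<^sub>R v"
  then obtain v where v: "v \<noteq> 0" "reynolds G \<phi> A *v v = c *\<^sub>R v" by blast
  define L where "L = reynolds G \<phi> A"
  define E where "E = mat_eigenspace L c"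
  have srE: "sr E" unfolding E_def L_def by (rule eig_sr)
  have "v \<in> E" using v unfolding E_def L_def mat_eigenspace_def by simp
  then have "E \<noteq> {0}" using v by blast
  then obtain U0 where U0: "irr U0" "U0 \<subseteq> E" using ex_irr[OF srE] by blast
  define C0 where "C0 = ic U0"
  have sC0: "subspace C0" using ic_sr unfolding C0_def by (simp add: sr_iff)
  have Leq: "\<And>g x. g \<in> carrier G \<Longrightarrow> L *v (P g *v x) = P g *v (L *v x)"
    unfolding L_def by (rule reynolds_equiv)
  have Lsym: "\<And>x y. (L *v x) \<bullet> y = x \<bullet> (L *v y)"
    unfolding L_def by (rule reynolds_sym[OF sym])
  have nz: "\<exists>u\<in>U. u \<noteq> 0" if "irr U" for U
  proof -
    have "U \<noteq> {0}" "0 \<in> U" using that by (auto simp: irreducible_subrep_def sr_iff subspace_0)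
    then show ?thesis by blast
  qed
  have EO: "E \<inter> orth C0 = {0}"
  proof (rule ccontr)
    assume ne: "E \<inter> orth C0 \<noteq> {0}"
    have "sr (E \<inter> orth C0)" using srE orth_sr[OF ic_sr] unfolding C0_def by (rule sr_Int)
    then obtain U1 where U1: "irr U1" "U1 \<subseteq> E \<inter> orth C0" using ex_irr ne by blast
    define C1 where "C1 = ic U1"
    obtain w where w: "w \<in> U1" "w \<noteq> 0" using nz[OF U1(1)] by blast
    obtain v0 where v0: "v0 \<in> U0" "v0 \<noteq> 0" using nz[OF U0(1)] by blast
    have wC1: "w \<in> C1" using self_in_ic[OF U1(1)] w unfolding C1_def by blast
    have v0C0: "v0 \<in> C0" using self_in_ic[OF U0(1)] v0 unfolding C0_def by blast
    show False
    proof (cases "C1 = C0")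
      case True
      then have "w \<in> C0 \<inter> orth C0" using wC1 w U1 by blast
      then show False using orth_Int[OF sC0] w by blast
    next
      case False
      have "bad C0 C1 L"
        unfolding bad_def
        using v0 v0C0 w wC1 U0(2) U1(2) unfolding E_def mat_eigenspace_def by blast
      moreover have "C0 \<in> {ic U |U. irr U}" "C1 \<in> {ic U |U. irr U}"
        unfolding C0_def C1_def using U0 U1 by blast+
      ultimately show False using GC False unfolding L_def by blast
    qed
  qed
  have "E \<subseteq> C0"
  proof
    fix x assume x: "x \<in> E"
    then have Lx: "L *v x = c *\<^sub>R x" unfolding E_def mat_eigenspace_def by simp
    obtain f where f: "linear f" "\<forall>x. f x \<in> C0" "\<forall>x. x - f x \<in> orth C0"
      using proj_exists[OF ic_sr] unfolding C0_def by blast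
    define u where "u = x - f x"
    have uO: "u \<in> orth C0" using f(3) unfolding u_def by blast
    have LfC: "L *v f x \<in> C0" using ic_invariant[OF U0(1) Leq] f(2) unfolding C0_def by blast
    have LuO: "L *v u \<in> orth C0"
    proof -
      have "(L *v u) \<bullet> w = 0" if w: "w \<in> C0" for w
      proof -
        have "L *v w \<in> C0" using ic_invariant[OF U0(1) Leq] w unfolding C0_def by blast
        then have "u \<bullet> (L *v w) = 0" using uO unfolding orth_def by blast
        then show ?thesis by (simp add: Lsym)
      qed
      then show ?thesis unfolding orth_def by blast
    qed
    have "L *v u - c *\<^sub>R u = c *\<^sub>R f x - L *v f x"
      unfolding u_def using Lx by (simp add: matrix_vector_mult_diff_distrib algebra_simps)
    moreover have "L *v u - c *\<^sub>R u \<in> orth C0"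
      using LuO uO orth_subspace by (metis subspace_diff subspace_mul)
    moreover have "c *\<^sub>R f x - L *v f x \<in> C0"
      using LfC f(2) sC0 by (metis subspace_diff subspace_mul)
    ultimately have "L *v u - c *\<^sub>R u \<in> C0 \<inter> orth C0" by simp
    then have "L *v u = c *\<^sub>R u" using orth_Int[OF sC0] by simp
    then have "u \<in> E \<inter> orth C0" using uO unfolding E_def mat_eigenspace_def by simp
    then have "u = 0" using EO by blast
    then show "x \<in> C0" using f(2) unfolding u_def by (metis eq_iff_diff_eq_0)
  qed
  then show "\<exists>U. irr U \<and> mat_eigenspace (reynolds G \<phi> A) c \<subseteq> ic U"
    using U0(1) unfolding E_def L_def C0_def by blast
qed

end

abbreviation LL :: "('a::finite \<Rightarrow> real) measure" where
  "LL \<equiv> PiM UNIV (\<lambda>_. lborel)"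

lemma psf_lborel: "product_sigma_finite (\<lambda>_::'a. lborel::real measure)"
  unfolding product_sigma_finite_def using lborel.sigma_finite_measure_axioms by blast

lemma sets_LL: "sets (LL :: ('a::finite \<Rightarrow> real) measure) = sets borel"
proof -
  have "sets (LL :: ('a::finite \<Rightarrow> real) measure) = sets (PiM UNIV (\<lambda>_::'a. borel::real measure))"
    by (rule sets_PiM_cong) auto
  also have "\<dots> = sets borel" by (rule sets_PiM_equal_borel)
  finally show ?thesis .
qed

lemma space_LL: "space (LL :: ('a::finite \<Rightarrow> real) measure) = UNIV"
  by (simp add: space_PiM)

lemma plus_vimage_borel: "A \<in> sets borel \<Longrightarrow> (+) (a::real) -` A \<in> sets borel"
  by (rule measurable_sets_borel) simp_all

lemma sf_LL: "sigma_finite_measure (LL :: ('a::finite \<Rightarrow> real) measure)"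
  by (rule product_sigma_finite.sigma_finite[OF psf_lborel]) simp

lemma translate_meas: "(\<lambda>X i. c i + X i) \<in> measurable (LL :: ('a::finite \<Rightarrow> real) measure) LL"
  by (rule measurable_PiM_single') (auto simp: space_PiM)

lemma LL_translate:
  fixes c :: "'a::finite \<Rightarrow> real"
  shows "distr LL LL (\<lambda>X i. c i + X i) = LL"
proof -
  interpret product_sigma_finite "\<lambda>_::'a. lborel::real measure" by (rule psf_lborel)
  show ?thesis
  proof (rule PiM_eqI)
    fix A :: "'a \<Rightarrow> real set" assume A: "\<And>i. i \<in> UNIV \<Longrightarrow> A i \<in> sets (lborel::real measure)"
    have "(\<lambda>X i. c i + X i) -` (Pi\<^sub>E UNIV A) \<inter> space LL = Pi\<^sub>E UNIV (\<lambda>i. (+) (c i) -` A i)"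
      by (auto simp: space_PiM PiE_def Pi_def)
    then have "emeasure (distr LL LL (\<lambda>X i. c i + X i)) (Pi\<^sub>E UNIV A) =
       emeasure LL (Pi\<^sub>E UNIV (\<lambda>i. (+) (c i) -` A i))"
      using A by (simp add: emeasure_distr translate_meas sets_PiM_I_finite)
    also have "\<dots> = (\<Prod>i\<in>UNIV. emeasure lborel ((+) (c i) -` A i))"
      using A by (intro emeasure_PiM) (auto intro: plus_vimage_borel)
    also have "\<dots> = (\<Prod>i\<in>UNIV. emeasure lborel (A i))"
    proof (rule prod.cong)
      fix i
      have "emeasure lborel (A i) = emeasure (distr lborel borel ((+) (c i))) (A i)"
        by (simp add: lborel_distr_plus)
      also have "\<dots> = emeasure lborel ((+) (c i) -` A i)"
        using A by (subst emeasure_distr) auto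
      finally show "emeasure lborel ((+) (c i) -` A i) = emeasure lborel (A i)" by simp
    qed simp
    finally show "emeasure (distr LL LL (\<lambda>X i. c i + X i)) (Pi\<^sub>E UNIV A) = (\<Prod>i\<in>UNIV. emeasure lborel (A i))" .
  qed simp_all
qed

lemma null_lines:
  fixes B :: "('a::finite \<Rightarrow> real) set" and Y :: "'a \<Rightarrow> real"
  assumes B: "B \<in> sets borel" and cnt: "\<And>X. countable {t. (\<lambda>i. X i + t * Y i) \<in> B}"
  shows "B \<in> null_sets LL"
proof -
  interpret product_sigma_finite "\<lambda>_::'a. lborel::real measure" by (rule psf_lborel)
  interpret pair_sigma_finite LL "lborel :: real measure"
    by (intro pair_sigma_finite.intro sf_LL lborel.sigma_finite_measure_axioms)
  have BL: "B \<in> sets LL" using B by (simp add: sets_LL)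
  let ?T = "\<lambda>t X i. t * Y i + X i"
  have Tm: "(\<lambda>p. ?T (snd p) (fst p)) \<in> measurable (LL \<Otimes>\<^sub>M lborel) LL"
    by (rule measurable_PiM_single') (auto simp: space_PiM)
  have Tt: "emeasure LL B = emeasure LL (?T t -` B \<inter> space LL)" for t
  proof -
    have "emeasure LL B = emeasure (distr LL LL (\<lambda>X i. t * Y i + X i)) B"
      using LL_translate[of "\<lambda>i. t * Y i"] by simp
    also have "\<dots> = emeasure LL (?T t -` B \<inter> space LL)"
      using BL by (subst emeasure_distr) (auto intro: translate_meas)
    finally show ?thesis .
  qed
  have "(\<integral>\<^sup>+ t. emeasure LL B * indicator {0..1::real} t \<partial>lborel) = emeasure LL B"
    by (subst nn_integral_cmult_indicator) auto
  then have "emeasure LL B = (\<integral>\<^sup>+ t. emeasure LL B * indicator {0..1::real} t \<partial>lborel)" by (rule sym)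
  also have "\<dots> = (\<integral>\<^sup>+ t. (\<integral>\<^sup>+ X. indicator B (?T t X) * indicator {0..1} t \<partial>LL) \<partial>lborel)"
  proof (rule nn_integral_cong)
    fix t :: real
    have "?T t -` B \<inter> space LL \<in> sets LL"
      by (rule measurable_sets[OF translate_meas BL])
    then have mT: "?T t -` B \<in> sets LL" by (simp add: space_LL)
    have "emeasure LL B = emeasure LL (?T t -` B)" using Tt[of t] by (simp add: space_LL)
    also have "\<dots> = (\<integral>\<^sup>+ X. indicator (?T t -` B) X \<partial>LL)"
      by (rule nn_integral_indicator[symmetric, OF mT])
    also have "\<dots> = (\<integral>\<^sup>+ X. indicator B (?T t X) \<partial>LL)"
      by (simp add: indicator_def)
    finally have "emeasure LL B = (\<integral>\<^sup>+ X. indicator B (?T t X) \<partial>LL)" .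
    moreover have "(\<lambda>X. indicator (?T t -` B) X :: ennreal) \<in> borel_measurable LL" using mT by simp
    then have mI: "(\<lambda>X. indicator B (?T t X) :: ennreal) \<in> borel_measurable LL"
      by (simp add: indicator_def)
    ultimately show "emeasure LL B * indicator {0..1} t = (\<integral>\<^sup>+ X. indicator B (?T t X) * indicator {0..1} t \<partial>LL)"
      by (simp add: nn_integral_multc[OF mI])
  qed
  also have "\<dots> = (\<integral>\<^sup>+ X. (\<integral>\<^sup>+ t. indicator B (?T t X) * indicator {0..1} t \<partial>lborel) \<partial>LL)"
  proof (rule Fubini')
    have m1: "(\<lambda>p. indicator B (?T (snd p) (fst p)) :: ennreal) \<in> borel_measurable (LL \<Otimes>\<^sub>M lborel)"
      using measurable_compose[OF Tm borel_measurable_indicator[OF BL]] by simp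
    have m2: "(\<lambda>p. indicator {0..1::real} (snd p) :: ennreal) \<in> borel_measurable (LL \<Otimes>\<^sub>M lborel)"
      by measurable
    have "(\<lambda>p. indicator B (?T (snd p) (fst p)) * indicator {0..1::real} (snd p) :: ennreal) \<in> borel_measurable (LL \<Otimes>\<^sub>M lborel)"
      using m1 m2 by (rule borel_measurable_times_ennreal)
    then show "(\<lambda>(X, t). indicator B (?T t X) * indicator {0..1::real} t :: ennreal) \<in> borel_measurable (LL \<Otimes>\<^sub>M lborel)"
      by (simp add: case_prod_beta')
  qed
  also have "\<dots> = (\<integral>\<^sup>+ X. 0 \<partial>(LL::('a \<Rightarrow> real) measure))"
  proof (rule nn_integral_cong)
    fix X :: "'a \<Rightarrow> real"
    have "{t. ?T t X \<in> B} \<in> null_sets lborel"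
    proof (rule countable_imp_null_set_lborel)
      have "{t. ?T t X \<in> B} = {t. (\<lambda>i. X i + t * Y i) \<in> B}" by (simp add: add.commute)
      then show "countable {t. ?T t X \<in> B}" using cnt by simp
    qed
    then have "AE t in lborel. t \<notin> {t. ?T t X \<in> B}" by (rule AE_not_in)
    then have ae: "AE t in lborel. indicator B (?T t X) * indicator {0..1::real} t = (0::ennreal)"
      by eventually_elim (simp add: indicator_def)
    show "(\<integral>\<^sup>+ t. indicator B (?T t X) * indicator {0..1} t \<partial>lborel) = 0"
      using nn_integral_cong_AE[OF ae] by simp
  qed
  finally have "emeasure LL B = 0" by simp
  then show ?thesis using BL by auto
qed


abbreviation NN :: "('a::finite \<Rightarrow> real) measure" where
  "NN \<equiv> PiM UNIV (\<lambda>_. density lborel std_normal_density)"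

lemma psf_normal: "product_sigma_finite (\<lambda>_::'a. density lborel std_normal_density)"
  unfolding product_sigma_finite_def
  by (simp add: prob_space_imp_sigma_finite prob_space_normal_density)

lemma sets_NN: "sets (NN :: ('a::finite \<Rightarrow> real) measure) = sets (LL :: ('a \<Rightarrow> real) measure)"
  by (rule sets_PiM_cong) auto

lemma rho_meas: "(\<lambda>X. \<Prod>i\<in>UNIV. ennreal (std_normal_density (X i))) \<in> borel_measurable (LL :: ('a::finite \<Rightarrow> real) measure)"
  by measurable

lemma NN_density:
  "(NN :: ('a::finite \<Rightarrow> real) measure) = density LL (\<lambda>X. \<Prod>i\<in>UNIV. ennreal (std_normal_density (X i)))"
proof -
  interpret N: product_sigma_finite "\<lambda>_::'a. density lborel std_normal_density" by (rule psf_normal)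
  interpret L: product_sigma_finite "\<lambda>_::'a. lborel::real measure" by (rule psf_lborel)
  have "density LL (\<lambda>X. \<Prod>i\<in>UNIV. ennreal (std_normal_density (X i))) = (NN :: ('a \<Rightarrow> real) measure)"
  proof (rule N.PiM_eqI)
    show "sets (density LL (\<lambda>X. \<Prod>i\<in>UNIV. ennreal (std_normal_density (X i)))) = sets (NN :: ('a \<Rightarrow> real) measure)"
      by (simp add: sets_NN)
  next
    fix A :: "'a \<Rightarrow> real set" assume A: "\<And>i. i \<in> UNIV \<Longrightarrow> A i \<in> sets (density lborel std_normal_density)"
    then have A': "\<And>i. A i \<in> sets borel" by simp
    have PA: "Pi\<^sub>E UNIV A \<in> sets (LL :: ('a \<Rightarrow> real) measure)"
      using A' by (intro sets_PiM_I_finite) auto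
    have "emeasure (density LL (\<lambda>X. \<Prod>i\<in>UNIV. ennreal (std_normal_density (X i)))) (Pi\<^sub>E UNIV A) =
      (\<integral>\<^sup>+ X. (\<Prod>i\<in>UNIV. ennreal (std_normal_density (X i))) * indicator (Pi\<^sub>E UNIV A) X \<partial>LL)"
      by (rule emeasure_density[OF rho_meas PA])
    also have "\<dots> = (\<integral>\<^sup>+ X. (\<Prod>i\<in>UNIV. ennreal (std_normal_density (X i)) * indicator (A i) (X i)) \<partial>LL)"
    proof (rule nn_integral_cong)
      fix X :: "'a \<Rightarrow> real"
      have "indicator (Pi\<^sub>E UNIV A) X = (\<Prod>i\<in>UNIV. indicator (A i) (X i) :: ennreal)"
        by (auto simp: indicator_def PiE_def Pi_def)
      then show "(\<Prod>i\<in>UNIV. ennreal (std_normal_density (X i))) * indicator (Pi\<^sub>E UNIV A) X =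
         (\<Prod>i\<in>UNIV. ennreal (std_normal_density (X i)) * indicator (A i) (X i))"
        by (simp add: prod.distrib)
    qed
    also have "\<dots> = (\<Prod>i\<in>UNIV. (\<integral>\<^sup>+ x. ennreal (std_normal_density x) * indicator (A i) x \<partial>lborel))"
      using A' by (intro L.product_nn_integral_prod) auto
    also have "\<dots> = (\<Prod>i\<in>UNIV. emeasure (density lborel std_normal_density) (A i))"
      using A' by (intro prod.cong refl) (simp add: emeasure_density)
    finally show "emeasure (density LL (\<lambda>X. \<Prod>i\<in>UNIV. ennreal (std_normal_density (X i)))) (Pi\<^sub>E UNIV A) =
      (\<Prod>i\<in>UNIV. emeasure (density lborel std_normal_density) (A i))" .
  qed simp
  then show ?thesis by simp
qed

lemma null_NN:
  assumes B: "B \<in> null_sets (LL :: ('a::finite \<Rightarrow> real) measure)"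
  shows "B \<in> null_sets (NN :: ('a \<Rightarrow> real) measure)"
proof -
  have "AE x in (LL :: ('a \<Rightarrow> real) measure). x \<notin> B" using B by (rule AE_not_in)
  then have "AE x in (LL :: ('a \<Rightarrow> real) measure). x \<in> B \<longrightarrow> (\<Prod>i\<in>UNIV. ennreal (std_normal_density (x i))) = 0"
    by eventually_elim auto
  moreover have "B \<in> sets LL" using B by auto
  ultimately show ?thesis
    unfolding NN_density using null_sets_density_iff[OF rho_meas] by blast
qed


definition Sm :: "(('n::finite \<times> 'n) \<Rightarrow> real) \<Rightarrow> real^'n^'n" where
  "Sm X = (\<chi> i j. (X (i, j) + X (j, i)) / sqrt 2)"

lemma GOE_Sm: "GOE = distr NN borel Sm"
  unfolding GOE_def Sm_def by simp

lemma Sm_cont: "continuous_on UNIV Sm"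
  unfolding Sm_def by (intro continuous_intros continuous_on_product_coordinates) simp

lemma Sm_borel: "Sm \<in> borel_measurable borel"
  by (rule borel_measurable_continuous_onI[OF Sm_cont])

lemma Sm_meas: "Sm \<in> measurable (NN :: (('n::finite \<times> 'n) \<Rightarrow> real) measure) borel"
proof -
  have "sets (NN :: (('n \<times> 'n) \<Rightarrow> real) measure) = sets borel" by (simp add: sets_NN sets_LL)
  then show ?thesis using Sm_borel measurable_cong_sets by blast
qed

lemma Sm_sym: "transpose (Sm X) = Sm X"
  unfolding Sm_def transpose_def by (simp add: vec_eq_iff add.commute)

lemma Sm_add: "Sm (\<lambda>k. X k + t * Y k) = Sm X + t *\<^sub>R Sm Y"
  unfolding Sm_def by (simp add: vec_eq_iff add_divide_distrib algebra_simps)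

lemma cont_mv:
  fixes f :: "'a::topological_space \<Rightarrow> real^'n::finite^'m::finite"
  assumes "continuous_on S f" "continuous_on S g"
  shows "continuous_on S (\<lambda>p. f p *v g p)"
  unfolding matrix_vector_mult_def using assms by (intro continuous_intros)

lemma R_cont:
  assumes F: "continuous_on UNIV F" and u: "continuous_on UNIV u"
  shows "continuous_on UNIV (\<lambda>p. reynolds G \<phi> (F p) *v u p)"
  unfolding reynolds_mulv
  by (intro continuous_intros cont_mv continuous_on_const F u)

lemma bad_normalize:
  assumes C1: "subspace C1" and C2: "subspace C2"
  shows "bad C1 C2 L \<longleftrightarrow> (\<exists>v w. v \<in> C1 \<and> w \<in> C2 \<and> norm v = 1 \<and> norm w = 1 \<and>
     L *v v = (v \<bullet> (L *v v)) *\<^sub>R v \<and> L *v w = (v \<bullet> (L *v v)) *\<^sub>R w)"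
proof
  assume "bad C1 C2 L"
  then obtain c v w where v: "v \<in> C1" "v \<noteq> 0" "L *v v = c *\<^sub>R v" and w: "w \<in> C2" "w \<noteq> 0" "L *v w = c *\<^sub>R w"
    unfolding bad_def by blast
  define v' where "v' = (1 / norm v) *\<^sub>R v"
  define w' where "w' = (1 / norm w) *\<^sub>R w"
  have v'1: "norm v' = 1" using v unfolding v'_def by simp
  have w'1: "norm w' = 1" using w unfolding w'_def by simp
  have Lv': "L *v v' = c *\<^sub>R v'" using v unfolding v'_def by (simp add: mulv_scaleR)
  have Lw': "L *v w' = c *\<^sub>R w'" using w unfolding w'_def by (simp add: mulv_scaleR)
  have "v' \<bullet> (L *v v') = c" using Lv' v'1 by (simp add: dot_square_norm)
  moreover have "v' \<in> C1" using v C1 unfolding v'_def by (simp add: subspace_mul)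
  moreover have "w' \<in> C2" using w C2 unfolding w'_def by (simp add: subspace_mul)
  ultimately show "\<exists>v w. v \<in> C1 \<and> w \<in> C2 \<and> norm v = 1 \<and> norm w = 1 \<and>
     L *v v = (v \<bullet> (L *v v)) *\<^sub>R v \<and> L *v w = (v \<bullet> (L *v v)) *\<^sub>R w"
    using v'1 w'1 Lv' Lw' by metis
next
  assume "\<exists>v w. v \<in> C1 \<and> w \<in> C2 \<and> norm v = 1 \<and> norm w = 1 \<and>
     L *v v = (v \<bullet> (L *v v)) *\<^sub>R v \<and> L *v w = (v \<bullet> (L *v v)) *\<^sub>R w"
  then obtain v w where "v \<in> C1 \<and> w \<in> C2 \<and> norm v = 1 \<and> norm w = 1 \<and>
     L *v v = (v \<bullet> (L *v v)) *\<^sub>R v \<and> L *v w = (v \<bullet> (L *v v)) *\<^sub>R w" by blast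
  then show "bad C1 C2 L" unfolding bad_def by (metis norm_zero zero_neq_one)
qed

lemma K_borel:
  fixes C1 C2 :: "(real^'n::finite) set" and \<phi> :: "'g \<Rightarrow> 'n \<Rightarrow> 'n"
  assumes C1: "subspace C1" and C2: "subspace C2"
  shows "{A. bad C1 C2 (reynolds G \<phi> A)} \<in> sets borel"
proof -
  let ?R = "reynolds G \<phi>"
  define Z where "Z = {p :: (real^'n^'n) \<times> ((real^'n) \<times> (real^'n)).
     fst (snd p) \<in> C1 \<and> snd (snd p) \<in> C2 \<and> norm (fst (snd p)) = 1 \<and> norm (snd (snd p)) = 1 \<and>
     ?R (fst p) *v fst (snd p) = (fst (snd p) \<bullet> (?R (fst p) *v fst (snd p))) *\<^sub>R fst (snd p) \<and>
     ?R (fst p) *v snd (snd p) = (fst (snd p) \<bullet> (?R (fst p) *v fst (snd p))) *\<^sub>R snd (snd p)}"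
  have c1: "continuous_on UNIV (\<lambda>p :: (real^'n^'n) \<times> ((real^'n) \<times> (real^'n)). ?R (fst p) *v fst (snd p))"
    by (intro R_cont continuous_intros)
  have c2: "continuous_on UNIV (\<lambda>p :: (real^'n^'n) \<times> ((real^'n) \<times> (real^'n)). ?R (fst p) *v snd (snd p))"
    by (intro R_cont continuous_intros)
  have clC1: "closed C1" using C1 by (rule closed_subspace)
  have clC2: "closed C2" using C2 by (rule closed_subspace)
  have m1: "closed {p :: (real^'n^'n) \<times> ((real^'n) \<times> (real^'n)). fst (snd p) \<in> C1}"
    using closed_vimage[OF clC1, of "\<lambda>p :: (real^'n^'n) \<times> ((real^'n) \<times> (real^'n)). fst (snd p)"]
    by (simp add: vimage_def continuous_intros)
  have m2: "closed {p :: (real^'n^'n) \<times> ((real^'n) \<times> (real^'n)). snd (snd p) \<in> C2}"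
    using closed_vimage[OF clC2, of "\<lambda>p :: (real^'n^'n) \<times> ((real^'n) \<times> (real^'n)). snd (snd p)"]
    by (simp add: vimage_def continuous_intros)
  have clZ: "closed Z"
    unfolding Z_def
    by (intro closed_Collect_conj m1 m2 closed_Collect_eq continuous_intros c1 c2)
  have eq: "{A. bad C1 C2 (?R A)} = fst ` Z"
  proof
    show "{A. bad C1 C2 (?R A)} \<subseteq> fst ` Z"
    proof
      fix A assume "A \<in> {A. bad C1 C2 (?R A)}"
      then obtain v w where vw: "v \<in> C1 \<and> w \<in> C2 \<and> norm v = 1 \<and> norm w = 1 \<and>
        ?R A *v v = (v \<bullet> (?R A *v v)) *\<^sub>R v \<and> ?R A *v w = (v \<bullet> (?R A *v v)) *\<^sub>R w"
        unfolding bad_normalize[OF C1 C2] by blast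
      then have "(A, v, w) \<in> Z" unfolding Z_def by simp
      then show "A \<in> fst ` Z" by (metis fst_conv image_eqI)
    qed
    show "fst ` Z \<subseteq> {A. bad C1 C2 (?R A)}"
    proof
      fix A assume "A \<in> fst ` Z"
      then obtain p where p: "p \<in> Z" "A = fst p" by blast
      then show "A \<in> {A. bad C1 C2 (?R A)}"
        unfolding bad_normalize[OF C1 C2] Z_def mem_Collect_eq by blast
    qed
  qed
  have "fst ` Z = (\<Union>n::nat. fst ` (Z \<inter> (cball 0 (real n) \<times> (cball 0 1 \<times> cball 0 1))))"
  proof
    show "fst ` Z \<subseteq> (\<Union>n::nat. fst ` (Z \<inter> (cball 0 (real n) \<times> (cball 0 1 \<times> cball 0 1))))"
    proof
      fix A assume "A \<in> fst ` Z"
      then obtain v w where p: "(A, v, w) \<in> Z" by force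
      obtain n :: nat where "norm A \<le> real n" using real_arch_simple by blast
      moreover have "norm v = 1" "norm w = 1" using p unfolding Z_def by auto
      ultimately have "(A, v, w) \<in> Z \<inter> (cball 0 (real n) \<times> (cball 0 1 \<times> cball 0 1))" using p by auto
      then show "A \<in> (\<Union>n::nat. fst ` (Z \<inter> (cball 0 (real n) \<times> (cball 0 1 \<times> cball 0 1))))"
        by (metis (no_types, lifting) UNIV_I UN_I fst_conv image_eqI)
    qed
  qed auto
  moreover have "fst ` (Z \<inter> (cball 0 (real n) \<times> (cball 0 1 \<times> cball 0 1))) \<in> sets borel" for n :: nat
  proof -
    have "compact (Z \<inter> (cball 0 (real n) \<times> (cball 0 1 \<times> cball 0 1)))"
      using clZ by (intro closed_Int_compact compact_Times compact_cball)
    then have "compact (fst ` (Z \<inter> (cball 0 (real n) \<times> (cball 0 1 \<times> cball 0 1))))"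
      by (intro compact_continuous_image continuous_intros)
    then show ?thesis by (intro borel_closed compact_imp_closed)
  qed
  ultimately show ?thesis unfolding eq by auto
qed


lemma eig_finite:
  fixes L :: "real^'n::finite^'n"
  assumes sa: "\<And>x y. (L *v x) \<bullet> y = x \<bullet> (L *v y)"
  shows "finite {c. \<exists>v. v \<noteq> 0 \<and> L *v v = c *\<^sub>R v}"
proof -
  let ?E = "{c. \<exists>v. v \<noteq> 0 \<and> L *v v = c *\<^sub>R v}"
  define e where "e c = (SOME v. v \<noteq> 0 \<and> L *v v = c *\<^sub>R v)" for c
  have ec: "e c \<noteq> 0 \<and> L *v e c = c *\<^sub>R e c" if "c \<in> ?E" for c
    using that unfolding e_def by (metis (mono_tags, lifting) mem_Collect_eq someI_ex)
  have orth: "e c \<bullet> e d = 0" if "c \<in> ?E" "d \<in> ?E" "c \<noteq> d" for c d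
  proof -
    have "c * (e c \<bullet> e d) = (L *v e c) \<bullet> e d" using ec[OF that(1)] by simp
    also have "\<dots> = e c \<bullet> (L *v e d)" by (rule sa)
    also have "\<dots> = d * (e c \<bullet> e d)" using ec[OF that(2)] by simp
    finally have "(c - d) * (e c \<bullet> e d) = 0" by (simp add: algebra_simps)
    then show ?thesis using that(3) by simp
  qed
  have inj: "inj_on e ?E"
  proof (rule inj_onI)
    fix c d assume cd: "c \<in> ?E" "d \<in> ?E" "e c = e d"
    show "c = d"
    proof (rule ccontr)
      assume "c \<noteq> d"
      then have "e c \<bullet> e c = 0" using orth[OF cd(1,2)] cd(3) by simp
      then show False using ec[OF cd(1)] by simp
    qed
  qed
  have "pairwise orthogonal (e ` ?E)"
    unfolding pairwise_def orthogonal_def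
  proof (intro ballI impI)
    fix x y assume x: "x \<in> e ` ?E" and y: "y \<in> e ` ?E" and ne: "x \<noteq> y"
    obtain c where c: "c \<in> ?E" "x = e c" using x by blast
    obtain d where d: "d \<in> ?E" "y = e d" using y by blast
    have "c \<noteq> d" using ne c d by blast
    then show "x \<bullet> y = 0" using orth c d by blast
  qed
  moreover have "0 \<notin> e ` ?E"
  proof
    assume "0 \<in> e ` ?E"
    then obtain c where "c \<in> ?E" "0 = e c" by blast
    then show False using ec[of c] by simp
  qed
  ultimately have "independent (e ` ?E)" by (rule pairwise_orthogonal_independent)
  then have "finite (e ` ?E)" by (rule finiteI_independent)
  then show ?thesis using inj by (rule finite_imageD)
qed

lemma reynolds_add_scale:
  "reynolds G \<phi> (A + t *\<^sub>R D) *v x = reynolds G \<phi> A *v x + t *\<^sub>R (reynolds G \<phi> D *v x)"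
proof (cases "finite (carrier G)")
  case True
  let ?k = "1 / real (card (carrier G))"
  have "(\<Sum>g\<in>carrier G. perm_matrix (\<phi> g) *v ((A + t *\<^sub>R D) *v (transpose (perm_matrix (\<phi> g)) *v x))) =
        (\<Sum>g\<in>carrier G. perm_matrix (\<phi> g) *v (A *v (transpose (perm_matrix (\<phi> g)) *v x))) +
        t *\<^sub>R (\<Sum>g\<in>carrier G. perm_matrix (\<phi> g) *v (D *v (transpose (perm_matrix (\<phi> g)) *v x)))"
    by (simp only: matrix_vector_mult_add_rdistrib scaleR_matrix_vector_assoc[symmetric]
        matrix_vector_right_distrib mulv_scaleR sum.distrib scaleR_sum_right)
  then show ?thesis
    by (simp only: reynolds_mulv scaleR_add_right scaleR_scaleR mult.commute)
qed (simp add: reynolds_def)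

context permrep begin

lemma reynolds_fixed:
  assumes Deq: "\<And>g x. g \<in> carrier G \<Longrightarrow> D *v (P g *v x) = P g *v (D *v x)"
  shows "reynolds G \<phi> D *v x = D *v x"
proof -
  interpret group G by (rule grp)
  have "(\<Sum>g\<in>carrier G. P g *v (D *v (P (inv g) *v x))) = (\<Sum>g\<in>carrier G. D *v x)"
  proof (rule sum.cong)
    fix g assume g: "g \<in> carrier G"
    then have "D *v (P (inv g) *v x) = P (inv g) *v (D *v x)" by (simp add: Deq)
    then show "P g *v (D *v (P (inv g) *v x)) = D *v x" using g by (simp add: P_inv_right)
  qed simp
  also have "\<dots> = real (card (carrier G)) *\<^sub>R (D *v x)" by (rule sum_constant_scaleR)
  finally have "reynolds G \<phi> D *v x = (1 / real (card (carrier G))) *\<^sub>R (real (card (carrier G)) *\<^sub>R (D *v x))"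
    by (simp only: reynolds_mulv')
  moreover have "card (carrier G) > 0" using finG one_closed card_gt_0_iff by blast
  ultimately show ?thesis by simp
qed

end

lemma space_NN: "space (NN :: ('a::finite \<Rightarrow> real) measure) = UNIV"
  by (simp add: space_PiM)

lemma nonsym_null: "{A :: real^'n::finite^'n. transpose A \<noteq> A} \<in> null_sets GOE"
proof -
  have Nb: "{A :: real^'n^'n. transpose A \<noteq> A} \<in> sets borel"
    unfolding transpose_def by (intro borel_open open_Collect_neq continuous_intros)
  have "Sm -` {A :: real^'n^'n. transpose A \<noteq> A} \<inter> space NN = {}" using Sm_sym by auto
  then show ?thesis unfolding GOE_Sm using Nb by (simp add: null_sets_distr_iff[OF Sm_meas])
qed

context permrep begin

lemma bad_null:
  assumes C1: "C1 \<in> {ic U |U. irr U}" and C2: "C2 \<in> {ic U |U. irr U}" and ne: "C1 \<noteq> C2"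
  shows "{A. bad C1 C2 (reynolds G \<phi> A)} \<in> null_sets GOE"
proof -
  obtain U1 where U1: "irr U1" "C1 = ic U1" using C1 by blast
  obtain U2 where U2: "irr U2" "C2 = ic U2" using C2 by blast
  have sC1: "subspace C1" and sC2: "subspace C2" using ic_sr U1 U2 by (auto simp: sr_iff)
  have C21: "C2 \<subseteq> orth C1" using ic_dichotomy[OF U2(1) U1(1)] U1(2) U2(2) ne by blast
  obtain f where f: "linear f" "\<forall>x. f x \<in> C1" "\<forall>x. x - f x \<in> orth C1" "\<forall>x\<in>C1. f x = x"
     "\<forall>g\<in>carrier G. \<forall>x. f (P g *v x) = P g *v f x" "\<forall>x y. f x \<bullet> y = x \<bullet> f y"
    using proj_exists[OF ic_sr, of U1] unfolding U1(2) by blast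
  define D where "D = matrix f"
  have Dx: "D *v x = f x" for x
    using fun_cong[OF matrix_vector_mul(2)[OF f(1)], of x] unfolding D_def .
  have DT: "transpose D = D"
  proof -
    have "transpose D *v y = D *v y" for y
    proof -
      have "x \<bullet> (transpose D *v y - D *v y) = 0" for x
        using inner_mulv_transpose[of D x y] f(6) by (simp add: Dx inner_diff_right)
      from this[of "transpose D *v y - D *v y"] show ?thesis by simp
    qed
    then show ?thesis by (simp add: matrix_eq)
  qed
  have DT': "D $ j $ i = D $ i $ j" for i j
  proof -
    have "(transpose D) $ i $ j = D $ j $ i" by (simp add: transpose_def)
    then show ?thesis using DT by simp
  qed
  have Deq: "\<And>g x. g \<in> carrier G \<Longrightarrow> D *v (P g *v x) = P g *v (D *v x)"
    using f(5) by (simp add: Dx)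
  have RD: "reynolds G \<phi> D *v x = f x" for x using reynolds_fixed[OF Deq] Dx by simp
  have fC2: "f w = 0" if w: "w \<in> C2" for w
  proof -
    have wo: "w \<in> orth C1" using w C21 by blast
    have "w - (w - f w) \<in> orth C1" using subspace_diff[OF orth_subspace wo, of "w - f w"] f(3) by blast
    then have "f w \<in> C1 \<inter> orth C1" using f(2) by simp
    then show ?thesis using orth_Int[OF sC1] by blast
  qed
  define Y where "Y = (\<lambda>(i, j). D $ i $ j / sqrt 2)"
  have SmY: "Sm Y = D"
  proof -
    have h: "(a / sqrt 2 + a / sqrt 2) / sqrt 2 = a" for a :: real
    proof -
      have "(a / sqrt 2 + a / sqrt 2) / sqrt 2 = (2 * a) / (sqrt 2 * sqrt 2)" by (simp add: field_simps)
      also have "\<dots> = a" by simp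
      finally show ?thesis .
    qed
    show ?thesis unfolding Sm_def Y_def by (simp add: vec_eq_iff DT' h)
  qed
  define K where "K = {A. bad C1 C2 (reynolds G \<phi> A)}"
  have Kb: "K \<in> sets borel" unfolding K_def by (rule K_borel[OF sC1 sC2])
  define B where "B = Sm -` K"
  have Bb: "B \<in> sets borel" unfolding B_def by (rule measurable_sets_borel[OF Sm_borel Kb])
  have cnt: "countable {t. (\<lambda>k. X k + t * Y k) \<in> B}" for X
  proof -
    define L where "L = reynolds G \<phi> (Sm X)"
    define E where "E = {c. \<exists>v. v \<noteq> 0 \<and> L *v v = c *\<^sub>R v}"
    have finE: "finite E" unfolding E_def L_def by (rule eig_finite) (rule reynolds_sym[OF Sm_sym])
    have "{t. (\<lambda>k. X k + t * Y k) \<in> B} \<subseteq> (\<lambda>(a, b). b - a) ` (E \<times> E)"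
    proof
      fix t assume "t \<in> {t. (\<lambda>k. X k + t * Y k) \<in> B}"
      then have "bad C1 C2 (reynolds G \<phi> (Sm X + t *\<^sub>R D))"
        unfolding B_def K_def by (simp add: Sm_add SmY)
      then obtain c v w where v: "v \<in> C1" "v \<noteq> 0" "reynolds G \<phi> (Sm X + t *\<^sub>R D) *v v = c *\<^sub>R v"
        and w: "w \<in> C2" "w \<noteq> 0" "reynolds G \<phi> (Sm X + t *\<^sub>R D) *v w = c *\<^sub>R w"
        unfolding bad_def by blast
      have "L *v v + t *\<^sub>R v = c *\<^sub>R v"
        using v f(4) unfolding L_def by (simp add: reynolds_add_scale RD)
      then have "L *v v = (c - t) *\<^sub>R v" by (simp add: algebra_simps)
      then have a: "c - t \<in> E" unfolding E_def using v(2) by blast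
      have "L *v w = c *\<^sub>R w"
        using w fC2[OF w(1)] unfolding L_def by (simp add: reynolds_add_scale RD)
      then have b: "c \<in> E" unfolding E_def using w(2) by blast
      have "t = (\<lambda>(a, b). b - a) (c - t, c)" by simp
      then show "t \<in> (\<lambda>(a, b). b - a) ` (E \<times> E)" using a b by blast
    qed
    moreover have "countable ((\<lambda>(a, b). b - a) ` (E \<times> E))"
      using finE by (intro countable_finite finite_imageI finite_cartesian_product)
    ultimately show ?thesis by (rule countable_subset)
  qed
  have "B \<in> null_sets NN" by (rule null_NN[OF null_lines[OF Bb cnt]])
  then show ?thesis
    unfolding GOE_Sm K_def[symmetric] using Kb
    by (simp add: null_sets_distr_iff[OF Sm_meas] space_NN B_def)
qed

lemma main:
  "AE A in GOE. \<forall>c. (\<exists>v. v \<noteq> 0 \<and> reynolds G \<phi> A *v v = c *\<^sub>R v) \<longrightarrow>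
           (\<exists>U. irr U \<and> mat_eigenspace (reynolds G \<phi> A) c \<subseteq> ic U)"
proof -
  let ?C = "{ic U |U. irr U}"
  have ae1: "AE A in GOE. transpose A = A"
    by (rule AE_I'[OF nonsym_null]) auto
  have ae2: "AE A in GOE. \<forall>C1\<in>?C. \<forall>C2\<in>?C. C1 \<noteq> C2 \<longrightarrow> \<not> bad C1 C2 (reynolds G \<phi> A)"
  proof (rule AE_finite_allI[OF comps_finite])
    fix C1 assume C1: "C1 \<in> ?C"
    show "AE A in GOE. \<forall>C2\<in>?C. C1 \<noteq> C2 \<longrightarrow> \<not> bad C1 C2 (reynolds G \<phi> A)"
    proof (rule AE_finite_allI[OF comps_finite])
      fix C2 assume C2: "C2 \<in> ?C"
      show "AE A in GOE. C1 \<noteq> C2 \<longrightarrow> \<not> bad C1 C2 (reynolds G \<phi> A)"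
      proof (cases "C1 = C2")
        case True then show ?thesis by simp
      next
        case False
        show ?thesis by (rule AE_I'[OF bad_null[OF C1 C2 False]]) auto
      qed
    qed
  qed
  from ae1 ae2 show ?thesis
  proof eventually_elim
    case (elim A)
    then show ?case by (intro deterministic) auto
  qed
qed

end

theorem proposition3:
  fixes G :: "('g, 'b) monoid_scheme" and \<phi> :: "'g \<Rightarrow> 'n::finite \<Rightarrow> 'n"
  assumes "group_action G UNIV \<phi>"
    and "finite (carrier G)"
  shows "AE A in GOE. \<forall>c. (\<exists>v. v \<noteq> 0 \<and> reynolds G \<phi> A *v v = c *\<^sub>R v) \<longrightarrow>
           (\<exists>U. irreducible_subrep G \<phi> U \<and>
                mat_eigenspace (reynolds G \<phi> A) c \<subseteq> isotypic_component G \<phi> U)"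
proof -
  interpret permrep G \<phi>
    by (rule permrep.intro[OF assms(1)]) (simp add: permrep_axioms_def assms(2))
  show ?thesis by (rule main)
qed


end
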